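(* Let $\mathcal{C}$ be a category and $\mathcal{W}$ a class of morphisms of $\mathcal{C}$ satisfying (L0) and (L1) below. Let $\mathcal{W}_L$ be the class of morphisms of $\mathcal{C}$ generated under composition by $\mathcal{W}$ together with all split monomorphisms of $\mathcal{C}$. Then for every $w'\in\mathcal{W}_L$ there exists a morphism $k$ of $\mathcal{C}$ with $\mathrm{dom}(k)=\mathrm{cod}(w')$ such that $kw'\in\mathcal{W}$. (L0): $\mathcal{W}$ contains all identity morphisms and is closed under composition. (L1): For every $w\in\mathcal{W}$ and every morphism $f$ with $\mathrm{dom}(f)=\mathrm{dom}(w)$ there exist $w'\in\mathcal{W}$ and a morphism $f'$ with $\mathrm{dom}(f')=\mathrm{cod}(w)$, $\mathrm{dom}(w')=\mathrm{cod}(f)$ and $\mathrm{cod}(f')=\mathrm{cod}(w')$ such that $w'f=f'w$.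
   Context: A split monomorphism is a morphism $m$ that has a left inverse, i.e. a morphism $e$ with $em=\mathrm{id}_{\mathrm{dom}(m)}$. *)

theory Defs
  imports Main
begin

text \<open>A (small or large) category given by explicit data: a set of objects, a set of
  morphisms, domain, codomain, identities and composition (comp g f = g f, i.e. f first).\<close>

record ('o, 'm) cat =
  Ob   :: "'o set"
  Mor  :: "'m set"
  Dom  :: "'m \<Rightarrow> 'o"
  Cod  :: "'m \<Rightarrow> 'o"
  Idm  :: "'o \<Rightarrow> 'm"
  Comp :: "'m \<Rightarrow> 'm \<Rightarrow> 'm"

definition category :: "('o, 'm) cat \<Rightarrow> bool" where
  "category C \<longleftrightarrow>
     (\<forall>f \<in> Mor C. Dom C f \<in> Ob C \<and> Cod C f \<in> Ob C) \<and>
     (\<forall>a \<in> Ob C. Idm C a \<in> Mor C \<and> Dom C (Idm C a) = a \<and> Cod C (Idm C a) = a) \<and>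
     (\<forall>f \<in> Mor C. \<forall>g \<in> Mor C. Cod C f = Dom C g \<longrightarrow>
        Comp C g f \<in> Mor C \<and> Dom C (Comp C g f) = Dom C f \<and> Cod C (Comp C g f) = Cod C g) \<and>
     (\<forall>f \<in> Mor C. Comp C f (Idm C (Dom C f)) = f \<and> Comp C (Idm C (Cod C f)) f = f) \<and>
     (\<forall>f \<in> Mor C. \<forall>g \<in> Mor C. \<forall>h \<in> Mor C. Cod C f = Dom C g \<longrightarrow> Cod C g = Dom C h \<longrightarrow>
        Comp C h (Comp C g f) = Comp C (Comp C h g) f)"

definition split_mono :: "('o, 'm) cat \<Rightarrow> 'm \<Rightarrow> bool" where
  "split_mono C m \<longleftrightarrow> m \<in> Mor C \<and>
     (\<exists>e \<in> Mor C. Dom C e = Cod C m \<and> Cod C e = Dom C m \<and> Comp C e m = Idm C (Dom C m))"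

definition L0 :: "('o, 'm) cat \<Rightarrow> 'm set \<Rightarrow> bool" where
  "L0 C W \<longleftrightarrow> (\<forall>a \<in> Ob C. Idm C a \<in> W) \<and>
     (\<forall>f \<in> W. \<forall>g \<in> W. Cod C f = Dom C g \<longrightarrow> Comp C g f \<in> W)"

definition L1 :: "('o, 'm) cat \<Rightarrow> 'm set \<Rightarrow> bool" where
  "L1 C W \<longleftrightarrow> (\<forall>w \<in> W. \<forall>f \<in> Mor C. Dom C f = Dom C w \<longrightarrow>
     (\<exists>w' \<in> W. \<exists>f' \<in> Mor C. Dom C f' = Cod C w \<and> Dom C w' = Cod C f \<and>
        Cod C f' = Cod C w' \<and> Comp C w' f = Comp C f' w))"

inductive_set WL :: "('o, 'm) cat \<Rightarrow> 'm set \<Rightarrow> 'm set" for C W where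
  base_W: "w \<in> W \<Longrightarrow> w \<in> WL C W"
| base_split: "split_mono C m \<Longrightarrow> m \<in> WL C W"
| comp: "f \<in> WL C W \<Longrightarrow> g \<in> WL C W \<Longrightarrow> Cod C f = Dom C g \<Longrightarrow> Comp C g f \<in> WL C W"

end

theory Submission
  imports Defs
begin

lemma cat_comp: "category C \<Longrightarrow> f \<in> Mor C \<Longrightarrow> g \<in> Mor C \<Longrightarrow> Cod C f = Dom C g \<Longrightarrow>
  Comp C g f \<in> Mor C \<and> Dom C (Comp C g f) = Dom C f \<and> Cod C (Comp C g f) = Cod C g"
  unfolding category_def by blast
lemma cat_assoc: "category C \<Longrightarrow> f \<in> Mor C \<Longrightarrow> g \<in> Mor C \<Longrightarrow> h \<in> Mor C \<Longrightarrow>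
  Cod C f = Dom C g \<Longrightarrow> Cod C g = Dom C h \<Longrightarrow> Comp C h (Comp C g f) = Comp C (Comp C h g) f"
  unfolding category_def by blast
lemma cat_unitl: "category C \<Longrightarrow> f \<in> Mor C \<Longrightarrow> Comp C (Idm C (Cod C f)) f = f"
  unfolding category_def by blast
lemma cat_unitr: "category C \<Longrightarrow> f \<in> Mor C \<Longrightarrow> Comp C f (Idm C (Dom C f)) = f"
  unfolding category_def by blast
lemma cat_idm: "category C \<Longrightarrow> f \<in> Mor C \<Longrightarrow> Idm C (Dom C f) \<in> Mor C \<and> Dom C (Idm C (Dom C f)) = Dom C f
   \<and> Cod C (Idm C (Dom C f)) = Dom C f \<and> Dom C f \<in> Ob C"
  unfolding category_def by blast

lemma key:
  assumes C: "category C" and WM: "W \<subseteq> Mor C" and L0: "L0 C W" and L1: "L1 C W"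
    and g: "g \<in> WL C W"
  shows "g \<in> Mor C \<and> (\<forall>x\<in>Mor C. Cod C x = Dom C g \<longrightarrow>
           (\<exists>k1\<in>Mor C. Dom C k1 = Cod C x \<and> Comp C k1 x \<in> W) \<longrightarrow>
           (\<exists>k\<in>Mor C. Dom C k = Cod C g \<and> Comp C k (Comp C g x) \<in> W))"
  using g
proof (induction rule: WL.induct)
  case (base_W g)
  have gM: "g \<in> Mor C" using base_W WM by blast
  show ?case
  proof (intro conjI gM ballI impI)
    fix x assume xM: "x \<in> Mor C" and cx: "Cod C x = Dom C g"
      and "\<exists>k1\<in>Mor C. Dom C k1 = Cod C x \<and> Comp C k1 x \<in> W"
    then obtain k1 where k1: "k1 \<in> Mor C" "Dom C k1 = Cod C x" "Comp C k1 x \<in> W" by blast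
    have "\<exists>w'' \<in> W. \<exists>f'' \<in> Mor C. Dom C f'' = Cod C g \<and> Dom C w'' = Cod C k1 \<and>
        Cod C f'' = Cod C w'' \<and> Comp C w'' k1 = Comp C f'' g"
      using L1 base_W k1 cx unfolding L1_def by simp
    then obtain w'' f'' where w'': "w'' \<in> W" "f'' \<in> Mor C" "Dom C f'' = Cod C g" "Dom C w'' = Cod C k1"
        "Cod C f'' = Cod C w''" "Comp C w'' k1 = Comp C f'' g" by blast
    have wM: "w'' \<in> Mor C" using w'' WM by blast
    have k1x: "Cod C (Comp C k1 x) = Cod C k1" using cat_comp[OF C xM k1(1)] k1 by simp
    have "Comp C f'' (Comp C g x) = Comp C (Comp C f'' g) x"
      using cat_assoc[OF C xM gM w''(2) cx] w''(3) by simp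
    also have "\<dots> = Comp C (Comp C w'' k1) x" using w'' by simp
    also have "\<dots> = Comp C w'' (Comp C k1 x)"
      using cat_assoc[OF C xM k1(1) wM] k1 w'' by simp
    also have "\<dots> \<in> W" using L0 w'' k1 k1x unfolding L0_def by simp
    finally show "\<exists>k\<in>Mor C. Dom C k = Cod C g \<and> Comp C k (Comp C g x) \<in> W"
      using w'' by blast
  qed
next
  case (base_split g)
  obtain e where gM: "g \<in> Mor C" and e: "e \<in> Mor C" "Dom C e = Cod C g" "Cod C e = Dom C g"
     "Comp C e g = Idm C (Dom C g)" using base_split unfolding split_mono_def by blast
  show ?case
  proof (intro conjI gM ballI impI)
    fix x assume xM: "x \<in> Mor C" and cx: "Cod C x = Dom C g"
      and "\<exists>k1\<in>Mor C. Dom C k1 = Cod C x \<and> Comp C k1 x \<in> W"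
    then obtain k1 where k1: "k1 \<in> Mor C" "Dom C k1 = Cod C x" "Comp C k1 x \<in> W" by blast
    have gx: "Comp C g x \<in> Mor C" "Cod C (Comp C g x) = Cod C g" using cat_comp[OF C xM gM cx] by auto
    have "Comp C (Comp C k1 e) (Comp C g x) = Comp C k1 (Comp C e (Comp C g x))"
      using cat_assoc[OF C gx(1) e(1) k1(1)] gx e k1 cx by simp
    also have "Comp C e (Comp C g x) = Comp C (Comp C e g) x"
      using cat_assoc[OF C xM gM e(1) cx] e by simp
    also have "\<dots> = x" using e cat_unitl[OF C xM] cx by simp
    finally have "Comp C (Comp C k1 e) (Comp C g x) \<in> W" using k1 by simp
    moreover have "Comp C k1 e \<in> Mor C" "Dom C (Comp C k1 e) = Cod C g"
      using cat_comp[OF C e(1) k1(1)] e k1 cx by auto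
    ultimately show "\<exists>k\<in>Mor C. Dom C k = Cod C g \<and> Comp C k (Comp C g x) \<in> W" by blast
  qed
next
  case (comp f g)
  have fM: "f \<in> Mor C" and gM: "g \<in> Mor C" using comp by auto
  have gf: "Comp C g f \<in> Mor C" "Dom C (Comp C g f) = Dom C f" "Cod C (Comp C g f) = Cod C g"
    using cat_comp[OF C fM gM comp.hyps(3)] by auto
  show ?case
  proof (intro conjI gf(1) ballI impI)
    fix x assume xM: "x \<in> Mor C" and cx: "Cod C x = Dom C (Comp C g f)"
      and h: "\<exists>k1\<in>Mor C. Dom C k1 = Cod C x \<and> Comp C k1 x \<in> W"
    have cx': "Cod C x = Dom C f" using cx gf by simp
    obtain k2 where k2: "k2 \<in> Mor C" "Dom C k2 = Cod C f" "Comp C k2 (Comp C f x) \<in> W"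
      using comp.IH(1) xM cx' h by blast
    have fx: "Comp C f x \<in> Mor C" "Cod C (Comp C f x) = Cod C f" using cat_comp[OF C xM fM cx'] by auto
    have "\<exists>k1\<in>Mor C. Dom C k1 = Cod C (Comp C f x) \<and> Comp C k1 (Comp C f x) \<in> W"
      using k2 fx by auto
    then obtain k where k: "k \<in> Mor C" "Dom C k = Cod C g" "Comp C k (Comp C g (Comp C f x)) \<in> W"
      using comp.IH(2) fx comp.hyps(3) by auto
    have "Comp C g (Comp C f x) = Comp C (Comp C g f) x" using cat_assoc[OF C xM fM gM cx' comp.hyps(3)] .
    then show "\<exists>k\<in>Mor C. Dom C k = Cod C (Comp C g f) \<and> Comp C k (Comp C (Comp C g f) x) \<in> W"
      using k gf by auto
  qed
qed

theorem mainTheorem1: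
  fixes C :: "('o, 'm) cat" and W :: "'m set"
  assumes "category C"
    and "W \<subseteq> Mor C"
    and "L0 C W"
    and "L1 C W"
    and "w' \<in> WL C W"
  shows "\<exists>k \<in> Mor C. Dom C k = Cod C w' \<and> Comp C k w' \<in> W"
proof -
  note K = key[OF assms]
  have wM: "w' \<in> Mor C" using K by blast
  define i where "i = Idm C (Dom C w')"
  have iM: "i \<in> Mor C" "Cod C i = Dom C w'" "Dom C i = Dom C w'" "Dom C w' \<in> Ob C"
    using cat_idm[OF assms(1) wM] unfolding i_def by auto
  have iW: "i \<in> W" using assms(3) iM unfolding L0_def i_def by blast
  have ii: "Comp C i i = i" using cat_unitl[OF assms(1) iM(1)] iM by (simp add: i_def)
  have "\<exists>k1\<in>Mor C. Dom C k1 = Cod C i \<and> Comp C k1 i \<in> W"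
    using iM iW ii by (intro bexI[of _ i]) auto
  then obtain k where k: "k \<in> Mor C" "Dom C k = Cod C w'" "Comp C k (Comp C w' i) \<in> W"
    using K iM by blast
  have "Comp C w' i = w'" using cat_unitr[OF assms(1) wM] unfolding i_def .
  then show ?thesis using k by auto
qed

end
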